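(* Let $X\in\mathbb R^{n\times p}$ be fixed and let $\mathbf y\in\mathbb R^n$ be a random vector with independent components satisfying, for some $\sigma\ge0$, $\mathbb E\,e^{t(\mathbf y_i-\mathbb E\mathbf y_i)}\le e^{\sigma^2t^2/2}$ for all $i$ and $t\in\mathbb R$. Let $\mathrm{cl}$ be a coding length with coding complexity $c(\cdot)$, and let $\eta\in(0,1)$. Then with probability $1-\eta$, for all $\beta\in\mathbb R^p$ and all $a>0$, \[ \|X\beta-\mathbb E\mathbf y\|_2^2\le(1+a)\left[\|X\beta-\mathbf y\|_2^2-\|\mathbf y-\mathbb E\mathbf y\|_2^2\right]+(2+a+1/a)\sigma^2\left[7.4c(\beta)+4.7\ln(4/\eta)\right]. \]
   Context: Let $\mathcal I=\{1,\ldots,p\}$ and $\mathrm{supp}(\beta)=\{j:\beta_j\ne0\}$. A function $\mathrm{cl}$ from subsets of $\mathcal I$ to $[0,\infty]$ is a coding length if $\sum_{F\subset\mathcal I,\,F\ne\emptyset}2^{-\mathrm{cl}(F)}\le1$, with $\mathrm{cl}(\emptyset)=0$. The coding complexity is $c(F)=|F|+\mathrm{cl}(F)$ for $F\subset\mathcal I$, and $c(\beta)=\min\{c(F):\mathrm{supp}(\beta)\subset F\}$ for $\beta\in\mathbb R^p$. *)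

theory Defs
  imports "HOL-Probability.Probability"
begin

text \<open>Support of a vector indexed by the finite type 'p (playing the role of I = {1..p}).\<close>
definition supp :: "real ^ 'p \<Rightarrow> 'p set" where
  "supp \<beta> = {j. \<beta> $ j \<noteq> 0}"

definition pow2_neg :: "ereal \<Rightarrow> real" where
  "pow2_neg x = (if x = \<infinity> then 0 else 2 powr (- real_of_ereal x))"

definition coding_length :: "('p::finite set \<Rightarrow> ereal) \<Rightarrow> bool" where
  "coding_length cl \<longleftrightarrow> (\<forall>F. 0 \<le> cl F) \<and> cl {} = 0 \<and>
     (\<Sum>F\<in>{F::'p set. F \<noteq> {}}. pow2_neg (cl F)) \<le> 1"

definition coding_complexity_set :: "('p::finite set \<Rightarrow> ereal) \<Rightarrow> 'p set \<Rightarrow> ereal" where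
  "coding_complexity_set cl F = ereal (real (card F)) + cl F"

definition coding_complexity :: "('p::finite set \<Rightarrow> ereal) \<Rightarrow> real ^ 'p \<Rightarrow> ereal" where
  "coding_complexity cl \<beta> = (INF F\<in>{F. supp \<beta> \<subseteq> F}. coding_complexity_set cl F)"

end

theory Submission
  imports Defs
begin

abbreviation "GN \<equiv> density lborel std_normal_density"

lemma nn_normal_density: "0 < s \<Longrightarrow> (\<integral>\<^sup>+x. ennreal (normal_density m s x) \<partial>lborel) = 1"
  by (subst nn_integral_eq_integral) auto

lemma gauss_mgf: "(\<integral>\<^sup>+g. ennreal (exp (t*g)) \<partial>GN) = ennreal (exp (t^2/2))"
proof -
  have eq: "std_normal_density x * exp (t*x) = exp (t^2/2) * normal_density t 1 x" for x
  proof -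
    have "exp (- x\<^sup>2 / 2) * exp (t*x) = exp (t^2/2) * exp (- (x - t)\<^sup>2 / 2)"
      by (simp add: exp_add[symmetric] power2_eq_square field_simps)
    then show ?thesis unfolding std_normal_density_def normal_density_def by simp
  qed
  have "(\<integral>\<^sup>+g. ennreal (exp (t*g)) \<partial>GN) = (\<integral>\<^sup>+x. ennreal (std_normal_density x) * ennreal (exp (t*x)) \<partial>lborel)"
    by (subst nn_integral_density) auto
  also have "\<dots> = (\<integral>\<^sup>+x. ennreal (exp (t^2/2)) * ennreal (normal_density t 1 x) \<partial>lborel)"
    by (intro nn_integral_cong) (simp add: eq[symmetric] ennreal_mult'[symmetric])
  also have "\<dots> = ennreal (exp (t^2/2))"
    by (subst nn_integral_cmult) (auto simp: nn_normal_density)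
  finally show ?thesis .
qed

lemma gauss_sq:
  assumes "0 \<le> c" "c \<le> 1/4"
  shows "(\<integral>\<^sup>+g. ennreal (exp (c*g^2)) \<partial>GN) \<le> ennreal (sqrt 2)"
proof -
  have eq: "std_normal_density x * exp (x^2/4) = sqrt 2 * normal_density 0 (sqrt 2) x" for x
  proof -
    have "exp (- x\<^sup>2 / 2) * exp (x^2/4) = exp (- x\<^sup>2 / 4)"
      by (simp add: exp_add[symmetric] field_simps)
    moreover have "sqrt (2 * pi * 2) = sqrt 2 * sqrt (2*pi)"
      by (simp add: real_sqrt_mult[symmetric] mult_ac)
    ultimately show ?thesis unfolding std_normal_density_def normal_density_def
      by (simp add: field_simps)
  qed
  have "(\<integral>\<^sup>+g. ennreal (exp (c*g^2)) \<partial>GN) \<le> (\<integral>\<^sup>+g. ennreal (exp (g^2/4)) \<partial>GN)"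
    proof (intro nn_integral_mono ennreal_leI, subst exp_le_cancel_iff)
    fix x :: real
    have "c * x^2 \<le> (1/4) * x^2" using assms by (intro mult_right_mono) auto
    then show "c * x^2 \<le> x^2/4" by simp
  qed
  also have "\<dots> = (\<integral>\<^sup>+x. ennreal (std_normal_density x) * ennreal (exp (x^2/4)) \<partial>lborel)"
    by (subst nn_integral_density) auto
  also have "\<dots> = (\<integral>\<^sup>+x. ennreal (sqrt 2) * ennreal (normal_density 0 (sqrt 2) x) \<partial>lborel)"
    by (intro nn_integral_cong) (simp add: eq[symmetric] ennreal_mult'[symmetric])
  also have "\<dots> = ennreal (sqrt 2)"
    by (subst nn_integral_cmult) (auto simp: nn_normal_density)
  finally show ?thesis .
qed

lemma sigma_finite_GN: "sigma_finite_measure GN"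
  using prob_space_normal_density[of 1 0] prob_space_imp_sigma_finite by simp

lemma prob_PiGN: "prob_space (PiM B (\<lambda>_. GN))"
  by (rule prob_space_PiM) (rule prob_space_normal_density, simp)

lemma psf_GN: "product_sigma_finite (\<lambda>_. GN)"
  unfolding product_sigma_finite_def using sigma_finite_GN by blast

lemma norm_orth_comb:
  fixes B :: "('a::real_inner) set"
  assumes "finite B" "pairwise orthogonal B" "\<And>w. w\<in>B \<Longrightarrow> norm w = 1"
  shows "(norm (\<Sum>w\<in>B. c w *\<^sub>R w))^2 = (\<Sum>w\<in>B. (c w)^2)"
proof -
  have "pairwise (\<lambda>i j. orthogonal (c i *\<^sub>R i) (c j *\<^sub>R j)) B"
    by (rule pairwise_ortho_scaleR) (use assms(2) in simp)
  then have "(norm (\<Sum>w\<in>B. c w *\<^sub>R w))^2 = (\<Sum>w\<in>B. (norm (c w *\<^sub>R w))^2)"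
    by (rule norm_sum_Pythagorean[OF assms(1)])
  also have "\<dots> = (\<Sum>w\<in>B. (c w)^2)"
    using assms(3) by (intro sum.cong) (auto simp: power2_eq_square)
  finally show ?thesis .
qed

lemma core:
  fixes M :: "'w measure" and e :: "'w \<Rightarrow> real^'n" and B :: "(real^'n) set"
  assumes P: "prob_space M"
    and indep: "prob_space.indep_vars M (\<lambda>_. borel) (\<lambda>i \<omega>. e \<omega> $ i) UNIV"
    and mgf: "\<And>i t. (\<integral>\<^sup>+\<omega>. ennreal (exp (t * e \<omega> $ i)) \<partial>M) \<le> ennreal (exp (\<sigma>^2*t^2/2))"
    and B: "finite B" "pairwise orthogonal B" "\<And>w. w\<in>B \<Longrightarrow> norm w = 1"
    and s: "0 \<le> s" "s*\<sigma>^2 \<le> 1/2"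
  shows "(\<integral>\<^sup>+\<omega>. ennreal (exp (s * (\<Sum>w\<in>B. (w \<bullet> e \<omega>)^2) / 2)) \<partial>M) \<le> ennreal (sqrt 2 ^ card B)"
proof -
  interpret prob_space M by fact
  have me[measurable]: "(\<lambda>\<omega>. e \<omega> $ i) \<in> borel_measurable M" for i
    using indep unfolding indep_vars_def by auto
  have mi[measurable]: "(\<lambda>\<omega>. w \<bullet> e \<omega>) \<in> borel_measurable M" for w
    unfolding inner_vec_def by measurable
  let ?P = "PiM B (\<lambda>_. GN)"
  interpret PG: product_sigma_finite "\<lambda>_. GN" by (rule psf_GN)
  interpret P2: prob_space ?P by (rule prob_PiGN)
  interpret PS: pair_sigma_finite ?P M
    unfolding pair_sigma_finite_def
    using prob_space_imp_sigma_finite[OF prob_PiGN] prob_space_imp_sigma_finite[OF P] by blast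
  define f where "f G \<omega> = (\<Prod>w\<in>B. ennreal (exp (sqrt s * (w \<bullet> e \<omega>) * G w)))" for G \<omega>
  have step1: "ennreal (exp (s * (\<Sum>w\<in>B. (w \<bullet> e \<omega>)^2) / 2)) = (\<integral>\<^sup>+G. f G \<omega> \<partial>?P)" for \<omega>
  proof -
    have "s * (\<Sum>w\<in>B. (w \<bullet> e \<omega>)^2) / 2 = (\<Sum>w\<in>B. (sqrt s * (w \<bullet> e \<omega>))^2/2)"
      using s by (simp add: sum_distrib_left sum_divide_distrib power_mult_distrib)
    then have "exp (s * (\<Sum>w\<in>B. (w \<bullet> e \<omega>)^2) / 2) = (\<Prod>w\<in>B. exp ((sqrt s * (w \<bullet> e \<omega>))^2/2))"
      by (simp add: exp_sum B(1))
    then have "ennreal (exp (s * (\<Sum>w\<in>B. (w \<bullet> e \<omega>)^2) / 2)) = (\<Prod>w\<in>B. ennreal (exp ((sqrt s * (w \<bullet> e \<omega>))^2/2)))"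
      by (simp add: prod_ennreal)
    also have "\<dots> = (\<Prod>w\<in>B. \<integral>\<^sup>+g. ennreal (exp (sqrt s * (w \<bullet> e \<omega>) * g)) \<partial>GN)"
      by (simp add: gauss_mgf)
    also have "\<dots> = (\<integral>\<^sup>+G. f G \<omega> \<partial>?P)"
      unfolding f_def by (rule PG.product_nn_integral_prod[symmetric]) (auto simp: B(1))
    finally show ?thesis .
  qed
  have meas: "case_prod f \<in> borel_measurable (?P \<Otimes>\<^sub>M M)" unfolding f_def by measurable
  have step3: "(\<integral>\<^sup>+\<omega>. f G \<omega> \<partial>M) \<le> ennreal (exp (\<sigma>^2 * (s * (\<Sum>w\<in>B. (G w)^2)) / 2))" for G
  proof -
    define v where "v = (\<Sum>w\<in>B. (sqrt s * G w) *\<^sub>R w)"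
    have fv: "f G \<omega> = (\<Prod>i\<in>UNIV. ennreal (exp (v$i * e \<omega> $ i)))" for \<omega>
    proof -
      have "(\<Sum>w\<in>B. sqrt s * (w \<bullet> e \<omega>) * G w) = v \<bullet> e \<omega>"
        unfolding v_def by (simp add: inner_sum_left mult_ac)
      also have "\<dots> = (\<Sum>i\<in>UNIV. v$i * e \<omega> $ i)" by (simp add: inner_vec_def)
      finally have "(\<Sum>w\<in>B. sqrt s * (w \<bullet> e \<omega>) * G w) = (\<Sum>i\<in>UNIV. v$i * e \<omega> $ i)" .
      then have "(\<Prod>w\<in>B. exp (sqrt s * (w \<bullet> e \<omega>) * G w)) = (\<Prod>i\<in>UNIV. exp (v$i * e \<omega> $ i))"
        by (simp add: exp_sum[symmetric] B(1))
      then show ?thesis unfolding f_def by (simp add: prod_ennreal)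
    qed
    have "(\<integral>\<^sup>+\<omega>. f G \<omega> \<partial>M) = (\<Prod>i\<in>UNIV. \<integral>\<^sup>+\<omega>. ennreal (exp (v$i * e \<omega> $ i)) \<partial>M)"
      unfolding fv
      by (rule indep_vars_nn_integral[of UNIV "\<lambda>i \<omega>. ennreal (exp (v$i * e \<omega> $ i))"])
         (auto intro!: indep_vars_compose2[OF indep])
    also have "\<dots> \<le> (\<Prod>i\<in>UNIV. ennreal (exp (\<sigma>^2*(v$i)^2/2)))"
      by (intro prod_mono_ennreal mgf)
    also have "\<dots> = ennreal (exp (\<sigma>^2 * (\<Sum>i\<in>UNIV. (v$i)^2) / 2))"
      by (simp add: prod_ennreal exp_sum[symmetric] sum_distrib_left sum_divide_distrib)
    also have "(\<Sum>i\<in>UNIV. (v$i)^2) = (norm v)^2"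
      unfolding power2_norm_eq_inner inner_vec_def by (simp add: power2_eq_square)
    also have "\<dots> = (\<Sum>w\<in>B. (sqrt s * G w)^2)"
      unfolding v_def by (rule norm_orth_comb[OF B])
    also have "\<dots> = s * (\<Sum>w\<in>B. (G w)^2)"
      using s by (simp add: sum_distrib_left power_mult_distrib)
    finally show ?thesis .
  qed
  have "(\<integral>\<^sup>+\<omega>. ennreal (exp (s * (\<Sum>w\<in>B. (w \<bullet> e \<omega>)^2) / 2)) \<partial>M) = (\<integral>\<^sup>+\<omega>. (\<integral>\<^sup>+G. f G \<omega> \<partial>?P) \<partial>M)"
    by (simp add: step1)
  also have "\<dots> = (\<integral>\<^sup>+G. (\<integral>\<^sup>+\<omega>. f G \<omega> \<partial>M) \<partial>?P)"
    by (rule PS.Fubini'[OF meas])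
  also have "\<dots> \<le> (\<integral>\<^sup>+G. ennreal (exp (\<sigma>^2 * (s * (\<Sum>w\<in>B. (G w)^2)) / 2)) \<partial>?P)"
    by (intro nn_integral_mono step3)
  also have "\<dots> = (\<integral>\<^sup>+G. (\<Prod>w\<in>B. ennreal (exp ((\<sigma>^2 * s / 2) * (G w)^2))) \<partial>?P)"
    by (intro nn_integral_cong)
       (simp add: prod_ennreal exp_sum[symmetric] B(1) sum_distrib_left sum_divide_distrib mult_ac)
  also have "\<dots> = (\<Prod>w\<in>B. \<integral>\<^sup>+g. ennreal (exp ((\<sigma>^2 * s / 2) * g^2)) \<partial>GN)"
    by (rule PG.product_nn_integral_prod) (auto simp: B(1))
  also have "\<dots> \<le> (\<Prod>w\<in>B. ennreal (sqrt 2))"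
    using s by (intro prod_mono_ennreal gauss_sq) (auto simp: mult_ac)
  also have "\<dots> = ennreal (sqrt 2 ^ card B)"
    by (simp add: ennreal_power)
  finally show ?thesis .
qed

lemma tail_pos:
  fixes M :: "'w measure" and e :: "'w \<Rightarrow> real^'n" and B :: "(real^'n) set"
  assumes P: "prob_space M"
    and indep: "prob_space.indep_vars M (\<lambda>_. borel) (\<lambda>i \<omega>. e \<omega> $ i) UNIV"
    and mgf: "\<And>i t. (\<integral>\<^sup>+\<omega>. ennreal (exp (t * e \<omega> $ i)) \<partial>M) \<le> ennreal (exp (\<sigma>^2*t^2/2))"
    and B: "finite B" "pairwise orthogonal B" "\<And>w. w\<in>B \<Longrightarrow> norm w = 1"
    and sp: "0 < \<sigma>"
  shows "emeasure M {\<omega>\<in>space M. \<sigma>^2 * x < (\<Sum>w\<in>B. (w \<bullet> e \<omega>)^2)} \<le> ennreal (sqrt 2 ^ card B * exp (-x/4))"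
proof -
  interpret prob_space M by fact
  have me[measurable]: "(\<lambda>\<omega>. e \<omega> $ i) \<in> borel_measurable M" for i
    using indep unfolding indep_vars_def by auto
  have mi[measurable]: "(\<lambda>\<omega>. w \<bullet> e \<omega>) \<in> borel_measurable M" for w
    unfolding inner_vec_def by measurable
  define s where "s = 1 / (2*\<sigma>^2)"
  have s: "0 \<le> s" "s*\<sigma>^2 \<le> 1/2" using sp by (auto simp: s_def)
  define Q where "Q \<omega> = (\<Sum>w\<in>B. (w \<bullet> e \<omega>)^2)" for \<omega>
  have mQ[measurable]: "Q \<in> borel_measurable M" unfolding Q_def by measurable
  let ?A = "{\<omega>\<in>space M. \<sigma>^2 * x < Q \<omega>}"
  have Asets: "?A \<in> sets M" by measurable
  have ind: "indicator ?A \<omega> \<le> ennreal (exp (s * Q \<omega> / 2)) * ennreal (exp (-x/4))" for \<omega>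
  proof (cases "\<omega> \<in> ?A")
    case True
    then have "\<sigma>^2 * x < Q \<omega>" by auto
    then have "0 \<le> s * Q \<omega> / 2 + (-x/4)" using sp
      by (simp add: s_def field_simps)
    then have "1 \<le> exp (s * Q \<omega> / 2) * exp (-x/4)"
      by (simp add: exp_add[symmetric])
    then show ?thesis using True by (simp add: ennreal_mult'[symmetric] ennreal_mult''[symmetric])
  qed simp
  have "emeasure M ?A = (\<integral>\<^sup>+\<omega>. indicator ?A \<omega> \<partial>M)"
    using Asets by simp
  also have "\<dots> \<le> (\<integral>\<^sup>+\<omega>. ennreal (exp (s * Q \<omega> / 2)) * ennreal (exp (-x/4)) \<partial>M)"
    by (intro nn_integral_mono ind)
  also have "\<dots> = (\<integral>\<^sup>+\<omega>. ennreal (exp (s * Q \<omega> / 2)) \<partial>M) * ennreal (exp (-x/4))"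
    by (rule nn_integral_multc) measurable
  also have "\<dots> \<le> ennreal (sqrt 2 ^ card B) * ennreal (exp (-x/4))"
    unfolding Q_def by (intro mult_right_mono core[OF P indep mgf B s]) auto
  also have "\<dots> = ennreal (sqrt 2 ^ card B * exp (-x/4))"
    by (simp add: ennreal_mult[symmetric])
  finally show ?thesis unfolding Q_def .
qed

lemma tail_zero:
  fixes M :: "'w measure" and e :: "'w \<Rightarrow> real^'n" and B :: "(real^'n) set"
  assumes P: "prob_space M"
    and indep: "prob_space.indep_vars M (\<lambda>_. borel) (\<lambda>i \<omega>. e \<omega> $ i) UNIV"
    and mgf: "\<And>i t. (\<integral>\<^sup>+\<omega>. ennreal (exp (t * e \<omega> $ i)) \<partial>M) \<le> ennreal (exp (\<sigma>^2*t^2/2))"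
    and B: "finite B" "pairwise orthogonal B" "\<And>w. w\<in>B \<Longrightarrow> norm w = 1"
    and sp: "\<sigma> = 0"
  shows "emeasure M {\<omega>\<in>space M. 0 < (\<Sum>w\<in>B. (w \<bullet> e \<omega>)^2)} = 0"
proof -
  interpret prob_space M by fact
  have me[measurable]: "(\<lambda>\<omega>. e \<omega> $ i) \<in> borel_measurable M" for i
    using indep unfolding indep_vars_def by auto
  have mi[measurable]: "(\<lambda>\<omega>. w \<bullet> e \<omega>) \<in> borel_measurable M" for w
    unfolding inner_vec_def by measurable
  define Q where "Q \<omega> = (\<Sum>w\<in>B. (w \<bullet> e \<omega>)^2)" for \<omega>
  have mQ[measurable]: "Q \<in> borel_measurable M" unfolding Q_def by measurable
  have Q0: "0 \<le> Q \<omega>" for \<omega> unfolding Q_def by (intro sum_nonneg) auto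
  define C where "C = sqrt 2 ^ card B"
  have C: "0 < C" unfolding C_def by simp
  have "(\<integral>\<^sup>+\<omega>. ennreal (Q \<omega>) \<partial>M) \<le> 0"
  proof (rule ennreal_le_epsilon)
    fix d :: real assume d: "0 < d"
    define s where "s = 2 * C / d"
    have s: "0 < s" using C d by (simp add: s_def)
    have "(\<integral>\<^sup>+\<omega>. ennreal (Q \<omega>) \<partial>M) \<le> (\<integral>\<^sup>+\<omega>. ennreal (exp (s * Q \<omega> / 2)) * ennreal (2/s) \<partial>M)"
    proof (intro nn_integral_mono)
      fix \<omega>
      have "s * Q \<omega> / 2 \<le> exp (s * Q \<omega> / 2)" by (rule order.trans[OF _ exp_ge_add_one_self]) simp
      then have "Q \<omega> \<le> exp (s * Q \<omega> / 2) * (2/s)" using s by (simp add: field_simps)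
      then show "ennreal (Q \<omega>) \<le> ennreal (exp (s * Q \<omega> / 2)) * ennreal (2/s)"
        using s by (simp add: ennreal_mult[symmetric])
    qed
    also have "\<dots> = (\<integral>\<^sup>+\<omega>. ennreal (exp (s * Q \<omega> / 2)) \<partial>M) * ennreal (2/s)"
      by (rule nn_integral_multc) measurable
    also have "\<dots> \<le> ennreal C * ennreal (2/s)"
      unfolding Q_def C_def using s sp by (intro mult_right_mono core[OF P indep mgf B]) auto
    also have "\<dots> = ennreal d" using C d s by (simp add: ennreal_mult[symmetric] s_def)
    finally show "(\<integral>\<^sup>+\<omega>. ennreal (Q \<omega>) \<partial>M) \<le> 0 + ennreal d" by simp
  qed
  then have "(\<integral>\<^sup>+\<omega>. ennreal (Q \<omega>) \<partial>M) = 0" by simp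
  then have "AE \<omega> in M. ennreal (Q \<omega>) = 0" by (subst (asm) nn_integral_0_iff_AE) auto
  then have "AE \<omega> in M. \<not> 0 < Q \<omega>" by eventually_elim (use Q0 in auto)
  then show ?thesis unfolding Q_def[symmetric]
    by (subst (asm) AE_iff_measurable[OF _ refl]) auto
qed

lemma alg:
  fixes a n r t :: real
  assumes "0 < a" "0 \<le> n" "0 \<le> r" "t \<le> n * r"
  shows "n^2 \<le> (1+a) * (n^2 - 2*t) + (2 + a + 1/a) * r^2"
proof -
  have h1: "0 \<le> (a*n - (1+a)*r)^2 / a" using assms by simp
  have h2: "0 \<le> 2*(1+a)*(n*r - t)" using assms by simp
  have "(1+a) * (n^2 - 2*t) + (2 + a + 1/a) * r^2 - n^2 = (a*n - (1+a)*r)^2 / a + 2*(1+a)*(n*r - t)"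
    using assms by (simp add: field_simps power2_eq_square)
  then show ?thesis using h1 h2 by linarith
qed
lemma smult_scaleR: "c *s (x::real^'n) = c *\<^sub>R x" by (simp add: vec_eq_iff)
lemma proj_bound:
  fixes B :: "('a::euclidean_space) set"
  assumes B: "finite B" "pairwise orthogonal B" "\<And>w. w\<in>B \<Longrightarrow> norm w = 1"
    and u: "u \<in> span B"
  shows "u \<bullet> x \<le> norm u * sqrt (\<Sum>w\<in>B. (w \<bullet> x)^2)"
proof -
  define p where "p = (\<Sum>w\<in>B. (w \<bullet> x) *\<^sub>R w)"
  have orth: "orthogonal (x - p) w" if w: "w \<in> B" for w
  proof -
    have "p \<bullet> w = (\<Sum>w'\<in>B. (w' \<bullet> x) * (w' \<bullet> w))"
      unfolding p_def by (simp add: inner_sum_left)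
    also have "\<dots> = (w \<bullet> x) * (w \<bullet> w) + (\<Sum>w'\<in>B-{w}. (w' \<bullet> x) * (w' \<bullet> w))"
      using B(1) w by (simp add: sum.remove)
    also have "(\<Sum>w'\<in>B-{w}. (w' \<bullet> x) * (w' \<bullet> w)) = 0"
      using B(2) w by (intro sum.neutral) (auto simp: pairwise_def orthogonal_def)
    also have "w \<bullet> w = 1" using B(3)[OF w] by (simp add: dot_square_norm)
    finally have "p \<bullet> w = w \<bullet> x" by simp
    then show ?thesis unfolding orthogonal_def inner_diff_left by (simp add: inner_commute)
  qed
  have "orthogonal (x - p) u" by (rule orthogonal_to_span[OF u orth])
  then have "u \<bullet> x = u \<bullet> p" by (simp add: orthogonal_def inner_diff_left inner_diff_right inner_commute)
  also have "\<dots> \<le> norm u * norm p" by (rule norm_cauchy_schwarz)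
  also have "norm p = sqrt (\<Sum>w\<in>B. (w \<bullet> x)^2)"
    using norm_orth_comb[OF B, of "\<lambda>w. w \<bullet> x"] unfolding p_def
    by (metis norm_ge_zero real_sqrt_unique)
  finally show ?thesis .
qed

lemma num_bound:
  fixes k :: nat and c \<eta> :: real
  assumes "0 \<le> c" "0 < \<eta>" "\<eta> < 1"
  shows "sqrt 2 ^ (k+1) * exp (-(7.4 * (real k + c) + 4.7 * ln (4/\<eta>))/4) \<le> sqrt 2 / 4 * \<eta> * 2 powr (-c)"
proof -
  define L where "L = ln (4/\<eta>)"
  have L: "0 \<le> L" using assms by (simp add: L_def)
  have e: "exp (-(7.4 * (real k + c) + 4.7 * ln (4/\<eta>))/4) = exp (-1.85) ^ k * exp (-1.85 * c) * exp (-1.175 * L)"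
    by (simp add: L_def exp_add[symmetric] exp_of_nat_mult[symmetric] field_simps)
  have b1: "sqrt 2 * exp (-1.85) \<le> 1"
  proof -
    have h: "2 \<le> exp (1.85::real)" by (rule order.trans[OF _ exp_ge_add_one_self]) simp
    have "sqrt 2 \<le> (2::real)" using real_sqrt_le_mono[of 2 4] real_sqrt_four by linarith
    then have "sqrt 2 \<le> exp (1.85::real)" using h by (rule order.trans)
    then show ?thesis by (simp add: exp_minus field_simps)
  qed
  have p1: "(sqrt 2 * exp (-1.85)) ^ k \<le> 1" using b1 by (intro power_le_one) auto
  have p2: "exp (-1.85 * c) \<le> 2 powr (-c)"
  proof -
    have "ln 2 * c \<le> 1.85 * c" using ln_2_less_1 assms by (intro mult_right_mono) auto
    then show ?thesis by (simp add: powr_def mult_ac)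
  qed
  have p3: "exp (-1.175 * L) \<le> \<eta> / 4"
  proof -
    have "exp (-1.175 * L) \<le> exp (- L)" using L by simp
    also have "exp (- L) = \<eta>/4" using assms by (simp add: L_def exp_minus)
    finally show ?thesis .
  qed
  have "sqrt 2 ^ (k+1) * exp (-(7.4 * (real k + c) + 4.7 * ln (4/\<eta>))/4)
      = sqrt 2 * ((sqrt 2 * exp (-1.85)) ^ k * (exp (-1.85 * c) * exp (-1.175 * L)))"
    unfolding e by (simp add: power_mult_distrib mult_ac)
  also have "\<dots> \<le> sqrt 2 * (1 * (2 powr (-c) * (\<eta>/4)))"
    using p1 p2 p3 by (intro mult_left_mono mult_mono) auto
  finally show ?thesis by (simp add: mult_ac)
qed


theorem lemma5:
  fixes M :: "'w measure"
    and X :: "real ^ 'p ^ 'n"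
    and y :: "'w \<Rightarrow> real ^ 'n"
    and \<sigma> \<eta> :: real
    and cl :: "'p::finite set \<Rightarrow> ereal"
  assumes "prob_space M"
    and "prob_space.indep_vars M (\<lambda>_. borel) (\<lambda>i \<omega>. y \<omega> $ i) UNIV"
    and "\<And>i. integrable M (\<lambda>\<omega>. y \<omega> $ i)"
    and "\<sigma> \<ge> 0"
    and "\<And>i t. integrable M (\<lambda>\<omega>. exp (t * (y \<omega> $ i - prob_space.expectation M (\<lambda>\<omega>. y \<omega> $ i))))"
    and "\<And>i t. prob_space.expectation M
                 (\<lambda>\<omega>. exp (t * (y \<omega> $ i - prob_space.expectation M (\<lambda>\<omega>. y \<omega> $ i))))
               \<le> exp (\<sigma>^2 * t^2 / 2)"
    and "coding_length cl"
    and "0 < \<eta>" and "\<eta> < 1"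
  shows "\<exists>A\<in>sets M. measure M A \<ge> 1 - \<eta> \<and>
    (\<forall>\<omega>\<in>A. \<forall>\<beta>::real ^ 'p. \<forall>a::real. a > 0 \<longrightarrow>
       (let Ey = (\<chi> i. prob_space.expectation M (\<lambda>\<omega>. y \<omega> $ i)) in
        ereal ((norm (X *v \<beta> - Ey))^2)
        \<le> ereal ((1 + a) * ((norm (X *v \<beta> - y \<omega>))^2 - (norm (y \<omega> - Ey))^2))
           + ereal ((2 + a + 1 / a) * \<sigma>^2)
             * (ereal 7.4 * coding_complexity cl \<beta> + ereal (4.7 * ln (4 / \<eta>)))))"
  proof -
  interpret prob_space M by fact
  have P: "prob_space M" by fact
  define \<mu> where "\<mu> = (\<chi> i. expectation (\<lambda>\<omega>. y \<omega> $ i))"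
  define e where "e \<omega> = y \<omega> - \<mu>" for \<omega>
  have ecomp: "e \<omega> $ i = y \<omega> $ i - \<mu> $ i" for \<omega> i by (simp add: e_def)
  have ym[measurable]: "(\<lambda>\<omega>. y \<omega> $ i) \<in> borel_measurable M" for i using assms(3) by auto
  have em[measurable]: "(\<lambda>\<omega>. e \<omega> $ i) \<in> borel_measurable M" for i unfolding ecomp by measurable
  have indep_e: "indep_vars (\<lambda>_. borel) (\<lambda>i \<omega>. e \<omega> $ i) UNIV"
    using indep_vars_compose2[OF assms(2), of "\<lambda>i x. x - \<mu>$i" "\<lambda>_. borel"] by (simp add: ecomp)
  have mgf_e: "(\<integral>\<^sup>+\<omega>. ennreal (exp (t * e \<omega> $ i)) \<partial>M) \<le> ennreal (exp (\<sigma>^2*t^2/2))" for i t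
  proof -
    have "(\<integral>\<^sup>+\<omega>. ennreal (exp (t * e \<omega> $ i)) \<partial>M)
        = (\<integral>\<^sup>+\<omega>. ennreal (exp (t * (y \<omega> $ i - expectation (\<lambda>\<omega>. y \<omega> $ i)))) \<partial>M)"
      by (simp add: ecomp \<mu>_def)
    also have "\<dots> = ennreal (expectation (\<lambda>\<omega>. exp (t * (y \<omega> $ i - expectation (\<lambda>\<omega>. y \<omega> $ i)))))"
      by (rule nn_integral_eq_integral[OF assms(5)]) auto
    also have "\<dots> \<le> ennreal (exp (\<sigma>^2*t^2/2))"
      by (rule ennreal_leI[OF assms(6)])
    finally show ?thesis .
  qed
  have clF: "\<And>F. 0 \<le> cl F" "cl {} = 0" "(\<Sum>F\<in>{F::'p set. F \<noteq> {}}. pow2_neg (cl F)) \<le> 1"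
    using assms(7) unfolding coding_length_def by auto
  define gens where "gens F = (\<lambda>j. column j X) ` F \<union> {\<mu>}" for F
  define S where "S F = span (gens F)" for F
  define Bs where "Bs F = (SOME B. B \<subseteq> S F \<and> pairwise orthogonal B \<and> (\<forall>x\<in>B. norm x = 1) \<and> independent B \<and> card B = dim (S F) \<and> span B = S F)" for F
  have Bs: "finite (Bs F) \<and> pairwise orthogonal (Bs F) \<and> (\<forall>x\<in>Bs F. norm x = 1) \<and> span (Bs F) = S F \<and> card (Bs F) \<le> card F + 1" for F
  proof -
    have "subspace (S F)" unfolding S_def by (rule subspace_span)
    then obtain B where "B \<subseteq> S F" "pairwise orthogonal B" "\<And>x. x \<in> B \<Longrightarrow> norm x = 1"
              "independent B" "card B = dim (S F)" "span B = S F"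
      using orthonormal_basis_subspace[OF \<open>subspace (S F)\<close>] by blast
    then have ex: "\<exists>B. B \<subseteq> S F \<and> pairwise orthogonal B \<and> (\<forall>x\<in>B. norm x = 1) \<and> independent B \<and> card B = dim (S F) \<and> span B = S F"
      by blast
    have pr: "Bs F \<subseteq> S F \<and> pairwise orthogonal (Bs F) \<and> (\<forall>x\<in>Bs F. norm x = 1) \<and> independent (Bs F) \<and> card (Bs F) = dim (S F) \<and> span (Bs F) = S F"
      unfolding Bs_def by (rule someI_ex[OF ex])
    have fg: "finite (gens F)" unfolding gens_def by simp
    have "dim (S F) \<le> card (gens F)" unfolding S_def by (rule dim_le_card[OF _ fg]) simp
    also have "card (gens F) \<le> card ((\<lambda>j. column j X) ` F) + card {\<mu>}" unfolding gens_def by (rule card_Un_le)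
    also have "\<dots> \<le> card F + 1" using card_image_le[of F "\<lambda>j. column j X"] by simp
    finally show ?thesis using pr finiteI_independent by auto
  qed
  define Q where "Q F \<omega> = (\<Sum>w\<in>Bs F. (w \<bullet> e \<omega>)^2)" for F \<omega>
  have Qm[measurable]: "Q F \<in> borel_measurable M" for F
    unfolding Q_def inner_vec_def by measurable
  have Q0: "0 \<le> Q F \<omega>" for F \<omega> unfolding Q_def by (intro sum_nonneg) auto
  define xF where "xF F = 7.4 * (real (card F) + real_of_ereal (cl F)) + 4.7 * ln (4/\<eta>)" for F
  define Fin where "Fin = (if \<sigma> = 0 then UNIV else {F. cl F \<noteq> \<infinity>})"
  define bad where "bad F = {\<omega>\<in>space M. \<sigma>^2 * xF F < Q F \<omega>}" for F
  define A where "A = space M - (\<Union>F\<in>Fin. bad F)"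
  have finFin: "finite Fin" by (rule finite_subset[of _ UNIV]) auto
  have badm: "bad F \<in> sets M" for F unfolding bad_def by measurable
  have Um: "(\<Union>F\<in>Fin. bad F) \<in> sets M" using finFin badm by (intro sets.finite_UN) auto
  have Am: "A \<in> sets M" unfolding A_def using Um by auto
  have probbad: "measure M (bad F) \<le> (if \<sigma> = 0 then 0 else sqrt 2 / 4 * \<eta> * pow2_neg (cl F))"
    if F: "F \<in> Fin" for F
  proof (cases "\<sigma> = 0")
    case True
    have "bad F = {\<omega>\<in>space M. 0 < (\<Sum>w\<in>Bs F. (w \<bullet> e \<omega>)^2)}" unfolding bad_def Q_def using True by simp
    moreover have "emeasure M {\<omega>\<in>space M. 0 < (\<Sum>w\<in>Bs F. (w \<bullet> e \<omega>)^2)} = 0"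
      using Bs[of F] by (intro tail_zero[OF P indep_e mgf_e _ _ _ True]) auto
    ultimately show ?thesis using True by (simp add: measure_def)
  next
    case False
    then have sp: "0 < \<sigma>" using assms(4) by simp
    have clfin: "cl F \<noteq> \<infinity>" using F False by (simp add: Fin_def)
    have "emeasure M (bad F) \<le> ennreal (sqrt 2 ^ card (Bs F) * exp (-(xF F)/4))"
      unfolding bad_def Q_def using Bs[of F] by (intro tail_pos[OF P indep_e mgf_e _ _ _ sp]) auto
    then have "measure M (bad F) \<le> sqrt 2 ^ card (Bs F) * exp (-(xF F)/4)"
      by (simp add: emeasure_eq_measure ennreal_le_iff)
    also have "\<dots> \<le> sqrt 2 ^ (card F + 1) * exp (-(xF F)/4)"
      using Bs[of F] by (intro mult_right_mono power_increasing) auto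
    also have "\<dots> \<le> sqrt 2 / 4 * \<eta> * 2 powr (- real_of_ereal (cl F))"
      unfolding xF_def using clF(1)[of F] assms(8,9) by (intro num_bound) (auto simp: real_of_ereal_pos)
    also have "2 powr (- real_of_ereal (cl F)) = pow2_neg (cl F)"
      using clfin by (simp add: pow2_neg_def)
    finally show ?thesis using False by simp
  qed
  have pn0: "0 \<le> pow2_neg x" for x unfolding pow2_neg_def by simp
  have "measure M (\<Union>F\<in>Fin. bad F) \<le> (\<Sum>F\<in>Fin. measure M (bad F))"
    using finFin badm by (intro measure_UNION_le) auto
  also have "\<dots> \<le> \<eta>"
  proof (cases "\<sigma> = 0")
    case True
    then have "(\<Sum>F\<in>Fin. measure M (bad F)) \<le> (\<Sum>F\<in>Fin. 0)"
      using probbad by (intro sum_mono) fastforce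
    then show ?thesis using assms(8) by simp
  next
    case False
    have "(\<Sum>F\<in>Fin. measure M (bad F)) \<le> (\<Sum>F\<in>Fin. sqrt 2 / 4 * \<eta> * pow2_neg (cl F))"
      using probbad False by (intro sum_mono) fastforce
    also have "\<dots> \<le> (\<Sum>F\<in>UNIV. sqrt 2 / 4 * \<eta> * pow2_neg (cl F))"
      using assms(8) pn0 by (intro sum_mono2) auto
    also have "(\<Sum>F\<in>UNIV. pow2_neg (cl F)) = pow2_neg (cl {}) + (\<Sum>F\<in>{F::'p set. F \<noteq> {}}. pow2_neg (cl F))"
    proof -
      have u: "(UNIV::'p set set) = insert {} {F. F \<noteq> {}}" by auto
      show ?thesis by (subst u) (subst sum.insert; auto)
    qed
    then have "(\<Sum>F\<in>UNIV. pow2_neg (cl F)) \<le> 2"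
      using clF by (simp add: pow2_neg_def)
    then have "(\<Sum>F\<in>UNIV. sqrt 2 / 4 * \<eta> * pow2_neg (cl F)) \<le> sqrt 2 / 4 * \<eta> * 2"
    proof -
      have "(\<Sum>F\<in>UNIV. sqrt 2 / 4 * \<eta> * pow2_neg (cl F)) = sqrt 2 / 4 * \<eta> * (\<Sum>F\<in>UNIV. pow2_neg (cl F))"
        by (simp add: sum_distrib_left)
      also have "\<dots> \<le> sqrt 2 / 4 * \<eta> * 2"
        using assms(8) \<open>(\<Sum>F\<in>UNIV. pow2_neg (cl F)) \<le> 2\<close> by (intro mult_left_mono) auto
      finally show ?thesis .
    qed
    also have "\<dots> \<le> \<eta>"
    proof -
      have "sqrt 2 \<le> (2::real)" using real_sqrt_le_mono[of 2 4] real_sqrt_four by linarith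
      then show ?thesis using assms(8) by (simp add: field_simps)
    qed
    finally show ?thesis .
  qed
  finally have Ub: "measure M (\<Union>F\<in>Fin. bad F) \<le> \<eta>" .
  have mA: "measure M A \<ge> 1 - \<eta>"
    unfolding A_def using prob_compl[OF Um] Ub by simp
  have key: "norm (X *v \<beta> - \<mu>)^2 \<le> (1+a) * (norm (X *v \<beta> - y \<omega>)^2 - norm (y \<omega> - \<mu>)^2) + (2 + a + 1/a) * \<sigma>^2 * xF F"
    if \<omega>: "\<omega> \<in> A" and F: "F \<in> Fin" and sF: "supp \<beta> \<subseteq> F" and a: "0 < a" for \<omega> F \<beta> a
  proof -
    have QF: "Q F \<omega> \<le> \<sigma>^2 * xF F" using \<omega> F unfolding A_def bad_def by auto
    define u where "u = X *v \<beta> - \<mu>"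
    have Xs: "X *v \<beta> \<in> S F"
    proof -
      have "X *v \<beta> = (\<Sum>j\<in>UNIV. \<beta>$j *\<^sub>R column j X)" by (simp add: matrix_mult_sum smult_scaleR)
      also have "\<dots> \<in> S F" unfolding S_def
      proof (intro span_sum)
        fix j
        show "\<beta>$j *\<^sub>R column j X \<in> span (gens F)"
        proof (cases "\<beta>$j = 0")
          case False
          then have "j \<in> F" using sF by (auto simp: supp_def)
          then show ?thesis by (intro span_scale span_base) (auto simp: gens_def)
        qed (simp add: span_zero)
      qed
      finally show ?thesis .
    qed
    have "\<mu> \<in> S F" unfolding S_def gens_def by (intro span_base) auto
    then have "u \<in> S F" using Xs unfolding u_def S_def by (intro span_diff)
    then have uS: "u \<in> span (Bs F)" using Bs[of F] by simp
    have t: "u \<bullet> e \<omega> \<le> norm u * sqrt (Q F \<omega>)"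
      unfolding Q_def using Bs[of F] uS by (intro proj_bound) auto
    have al: "(norm u)^2 \<le> (1+a) * ((norm u)^2 - 2*(u \<bullet> e \<omega>)) + (2 + a + 1/a) * (sqrt (Q F \<omega>))^2"
      by (rule alg[OF a _ _ t]) (auto simp: Q0)
    have sq: "(sqrt (Q F \<omega>))^2 = Q F \<omega>" using Q0 by simp
    have "(2 + a + 1/a) * Q F \<omega> \<le> (2 + a + 1/a) * (\<sigma>^2 * xF F)"
      using QF a by (intro mult_left_mono) auto
    moreover have "norm (X *v \<beta> - y \<omega>)^2 - norm (y \<omega> - \<mu>)^2 = (norm u)^2 - 2*(u \<bullet> e \<omega>)"
    proof -
      have "X *v \<beta> - y \<omega> = u - e \<omega>" "y \<omega> - \<mu> = e \<omega>" unfolding u_def e_def by auto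
      moreover have "norm (u - e \<omega>)^2 = (norm u)^2 - 2*(u \<bullet> e \<omega>) + (norm (e \<omega>))^2"
        unfolding power2_norm_eq_inner inner_diff_left inner_diff_right by (simp add: inner_commute)
      ultimately show ?thesis by simp
    qed
    ultimately show ?thesis using al sq unfolding u_def by (simp add: mult_ac)
  qed
  show ?thesis
  proof (intro bexI[OF _ Am] conjI mA ballI allI impI)
    fix \<omega> \<beta> and a :: real assume \<omega>: "\<omega> \<in> A" and a: "0 < a"
    have Ey: "(\<chi> i. prob_space.expectation M (\<lambda>\<omega>. y \<omega> $ i)) = \<mu>" unfolding \<mu>_def by simp
    define R1 where "R1 = (1 + a) * ((norm (X *v \<beta> - y \<omega>))^2 - (norm (y \<omega> - \<mu>))^2)"
    define K where "K = (2 + a + 1 / a) * \<sigma>^2"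
    have K0: "0 \<le> K" unfolding K_def using a by auto
    have "ereal ((norm (X *v \<beta> - \<mu>))^2) \<le> ereal R1 + ereal K * (ereal 7.4 * coding_complexity cl \<beta> + ereal (4.7 * ln (4 / \<eta>)))"
    proof (cases "\<sigma> = 0")
      case True
      have "UNIV \<in> Fin" using True by (simp add: Fin_def)
      from key[OF \<omega> this _ a] have "(norm (X *v \<beta> - \<mu>))^2 \<le> R1" using True unfolding R1_def by simp
      then show ?thesis using True unfolding K_def by (simp add: zero_ereal_def[symmetric])
    next
      case False
      have "0 < 2 + a + 1/a" using a by (simp add: add_pos_pos)
      then have K: "0 < K" unfolding K_def using a assms(4) False by (auto intro!: mult_pos_pos)
      define S0 where "S0 = {F. supp \<beta> \<subseteq> F}"
      have C: "coding_complexity cl \<beta> = Min ((coding_complexity_set cl) ` S0)"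
        unfolding coding_complexity_def S0_def by (rule cInf_eq_Min) auto
      have "Min ((coding_complexity_set cl) ` S0) \<in> (coding_complexity_set cl) ` S0"
        unfolding S0_def by (rule Min_in) auto
      then obtain F0 where F0: "supp \<beta> \<subseteq> F0" and CF0: "coding_complexity cl \<beta> = coding_complexity_set cl F0"
        unfolding C S0_def by auto
      show ?thesis
      proof (cases "cl F0 = \<infinity>")
        case True
        then have "coding_complexity cl \<beta> = \<infinity>" unfolding CF0 coding_complexity_set_def by simp
        then show ?thesis using K by simp
      next
        case cfin: False
        have F0Fin: "F0 \<in> Fin" using cfin False by (simp add: Fin_def)
        have cle: "cl F0 = ereal (real_of_ereal (cl F0))" using cfin clF(1)[of F0]
          by (cases "cl F0") auto
        have "coding_complexity cl \<beta> = ereal (real (card F0) + real_of_ereal (cl F0))"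
          unfolding CF0 coding_complexity_set_def by (subst cle) simp
        then have "ereal R1 + ereal K * (ereal 7.4 * coding_complexity cl \<beta> + ereal (4.7 * ln (4 / \<eta>)))
            = ereal (R1 + K * xF F0)" unfolding xF_def by simp
        moreover have "(norm (X *v \<beta> - \<mu>))^2 \<le> R1 + K * xF F0"
          using key[OF \<omega> F0Fin F0 a] unfolding R1_def K_def by (simp add: mult_ac)
        ultimately show ?thesis by simp
      qed
    qed
    then show "let Ey = \<chi> i. prob_space.expectation M (\<lambda>\<omega>. y \<omega> $ i)
        in ereal ((norm (X *v \<beta> - Ey))\<^sup>2)
           \<le> ereal ((1 + a) * ((norm (X *v \<beta> - y \<omega>))\<^sup>2 - (norm (y \<omega> - Ey))\<^sup>2)) +
              ereal ((2 + a + 1 / a) * \<sigma>\<^sup>2) *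
              (ereal 7.4 * coding_complexity cl \<beta> + ereal (4.7 * ln (4 / \<eta>)))"
      unfolding Let_def Ey R1_def K_def .
  qed
qed

end
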